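(* Let $\lambda^\star=\sup_{N\in\mathcal{C}}\mathbb{E}[U_N]/\mathbb{E}[T_N]$. Then the stopping rule $$N^\star=\min\Big\{n\ge1:\ R_n\,\mathbb{I}(\mathrm{SNR}_n\ge\Gamma)\ge \frac{\lambda^\star(T_{\mathrm{ra}}+T_{\mathrm{data}})}{W T_{\mathrm{data}}}\Big\}$$ is optimal (it lies in $\mathcal{C}$ and $\mathbb{E}[U_{N^\star}]/\mathbb{E}[T_{N^\star}]=\lambda^\star$), and $\lambda^\star$ is the unique positive solution $\lambda$ of $$\mathbb{E}\Big[\big(\hat R_1-\lambda(T_{\mathrm{ra}}+T_{\mathrm{data}})\big)^+\Big]=\lambda\Big(\big(L-\tfrac12\big)T_{\mathrm{syn}}+\tfrac{T_{\mathrm{sib}}-T_{\mathrm{syn}}}{2}\,\mathbb{P}(\mathrm{SNR}_1\ge\Gamma)\Big),$$ where $(x)^+=\max(x,0)$.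
   Context: Standing setup (cell search model). Fix constants $T_{\mathrm{syn}}>0$, $T_{\mathrm{sib}}\ge T_{\mathrm{syn}}$ with $T_{\mathrm{sib}}/T_{\mathrm{syn}}$ a positive integer, $T_{\mathrm{ra}}>0$, $T_{\mathrm{data}}>0$, $W>0$, an integer $L\ge1$, and a real threshold $\Gamma$. Let $(\mathrm{SNR}_i,\beta_i,Y_i,Z_i)_{i\ge1}$ be independent and identically distributed random tuples with $\mathrm{SNR}_i\ge0$, $\beta_i\in[0,1]$, $Y_i\ge0$ with $\mathbb{E}[Y_i]=T_{\mathrm{syn}}/2$, and $Z_i$ uniformly distributed on $\{jT_{\mathrm{syn}}: j=0,1,\dots,T_{\mathrm{sib}}/T_{\mathrm{syn}}-1\}$ and independent of $\mathrm{SNR}_i$. The selection metric of cell $i$ is $R_i=\beta_i\log(1+\mathrm{SNR}_i)$, and $\mathbb{E}[R_1^2]<\infty$; assume $\mathbb{P}(R_1\,\mathbb{I}(\mathrm{SNR}_1\ge\Gamma)>0)>0$. Define $\hat R_n=W T_{\mathrm{data}}R_n\,\mathbb{I}(\mathrm{SNR}_n\ge\Gamma)$ and, for $n\ge1$, $$T_n=\sum_{i=1}^n\Big(Y_i+(L-1)T_{\mathrm{syn}}+Z_i\,\mathbb{I}(\mathrm{SNR}_i\ge\Gamma)\Big)+T_{\mathrm{ra}}+T_{\mathrm{data}},\qquad U_n=\max_{1\le i\le n}\hat R_i.$$ $\mathcal{C}$ denotes the set of stopping times $N\ge1$ with respect to the filtration generated by $(\mathrm{SNR}_i,\beta_i,Y_i,Z_i)_{i\le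 n}$ such that $\mathbb{E}[T_N]<\infty$. *)

theory Defs
  imports "HOL-Probability.Probability"
begin

definition ind :: "bool \<Rightarrow> real" where
  "ind b = (if b then 1 else 0)"

definition Rsel :: "(nat \<Rightarrow> 'a \<Rightarrow> real) \<Rightarrow> (nat \<Rightarrow> 'a \<Rightarrow> real) \<Rightarrow> nat \<Rightarrow> 'a \<Rightarrow> real" where
  "Rsel beta SNR i \<omega> = beta i \<omega> * ln (1 + SNR i \<omega>)"

definition Rhat :: "real \<Rightarrow> real \<Rightarrow> real \<Rightarrow> (nat \<Rightarrow> 'a \<Rightarrow> real) \<Rightarrow> (nat \<Rightarrow> 'a \<Rightarrow> real)
    \<Rightarrow> nat \<Rightarrow> 'a \<Rightarrow> real" where
  "Rhat W Tdata \<Gamma> beta SNR n \<omega> = W * Tdata * Rsel beta SNR n \<omega> * ind (SNR n \<omega> \<ge> \<Gamma>)"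

definition Ttime :: "real \<Rightarrow> nat \<Rightarrow> real \<Rightarrow> real \<Rightarrow> real \<Rightarrow> (nat \<Rightarrow> 'a \<Rightarrow> real)
    \<Rightarrow> (nat \<Rightarrow> 'a \<Rightarrow> real) \<Rightarrow> (nat \<Rightarrow> 'a \<Rightarrow> real) \<Rightarrow> nat \<Rightarrow> 'a \<Rightarrow> real" where
  "Ttime Tsyn L Tra Tdata \<Gamma> SNR Y Z n \<omega> =
     (\<Sum>i=1..n. Y i \<omega> + (real L - 1) * Tsyn + Z i \<omega> * ind (SNR i \<omega> \<ge> \<Gamma>)) + Tra + Tdata"

text \<open>U_n = max_{1 \<le> i \<le> n} Rhat_i (only used for n \<ge> 1).\<close>
definition Umax :: "(nat \<Rightarrow> 'a \<Rightarrow> real) \<Rightarrow> nat \<Rightarrow> 'a \<Rightarrow> real" where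
  "Umax Rh n \<omega> = Max ((\<lambda>i. Rh i \<omega>) ` {1..n})"

definition obs :: "(nat \<Rightarrow> 'a \<Rightarrow> real) \<Rightarrow> (nat \<Rightarrow> 'a \<Rightarrow> real) \<Rightarrow> (nat \<Rightarrow> 'a \<Rightarrow> real)
    \<Rightarrow> (nat \<Rightarrow> 'a \<Rightarrow> real) \<Rightarrow> nat \<Rightarrow> 'a \<Rightarrow> real \<times> real \<times> real \<times> real" where
  "obs SNR beta Y Z i \<omega> = (SNR i \<omega>, beta i \<omega>, Y i \<omega>, Z i \<omega>)"

definition filt :: "'a measure \<Rightarrow> (nat \<Rightarrow> 'a \<Rightarrow> real \<times> real \<times> real \<times> real) \<Rightarrow> nat \<Rightarrow> 'a measure" where
  "filt M X n = sigma (space M) {X i -` A \<inter> space M | i A. i \<in> {1..n} \<and> A \<in> sets borel}"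

definition stop_time_ge1 :: "'a measure \<Rightarrow> (nat \<Rightarrow> 'a measure) \<Rightarrow> ('a \<Rightarrow> enat) \<Rightarrow> bool" where
  "stop_time_ge1 M F N \<longleftrightarrow> (\<forall>\<omega>\<in>space M. 1 \<le> N \<omega>) \<and>
     (\<forall>n. {\<omega> \<in> space M. N \<omega> = enat n} \<in> sets (F n))"

definition stopped :: "(nat \<Rightarrow> 'a \<Rightarrow> real) \<Rightarrow> ('a \<Rightarrow> enat) \<Rightarrow> 'a \<Rightarrow> ennreal" where
  "stopped f N \<omega> = (case N \<omega> of enat n \<Rightarrow> ennreal (f n \<omega>) | \<infinity> \<Rightarrow> \<top>)"

definition classC :: "'a measure \<Rightarrow> (nat \<Rightarrow> 'a measure) \<Rightarrow> (nat \<Rightarrow> 'a \<Rightarrow> real) \<Rightarrow> ('a \<Rightarrow> enat) set" where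
  "classC M F T = {N. stop_time_ge1 M F N \<and> (\<integral>\<^sup>+ \<omega>. stopped T N \<omega> \<partial>M) < \<top>}"

definition rate :: "'a measure \<Rightarrow> (nat \<Rightarrow> 'a \<Rightarrow> real) \<Rightarrow> (nat \<Rightarrow> 'a \<Rightarrow> real) \<Rightarrow> ('a \<Rightarrow> enat) \<Rightarrow> ennreal" where
  "rate M U T N = (\<integral>\<^sup>+ \<omega>. stopped U N \<omega> \<partial>M) / (\<integral>\<^sup>+ \<omega>. stopped T N \<omega> \<partial>M)"

definition first_ge1 :: "(nat \<Rightarrow> bool) \<Rightarrow> enat" where
  "first_ge1 P = (if \<exists>n\<ge>1. P n then enat (LEAST n. 1 \<le> n \<and> P n) else \<infinity>)"

end

theory Submission imports Defs begin


lemma suminf_one: "(\<Sum>i. (1::ennreal)) = \<top>"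
proof (rule ccontr)
  assume "(\<Sum>i. (1::ennreal)) \<noteq> \<top>"
  then have "(\<Sum>i. ennreal 1) \<noteq> \<top>" by simp
  then have "summable (\<lambda>i::nat. 1::real)" using summable_suminf_not_top[of "\<lambda>_. 1::real"] by simp
  then show False by (simp add: summable_const_iff)
qed

lemma first_ge1_enat:
  "first_ge1 P = enat n \<longleftrightarrow> (1 \<le> n \<and> P n \<and> (\<forall>m. 1 \<le> m \<and> m < n \<longrightarrow> \<not> P m))"
proof
  assume a: "first_ge1 P = enat n"
  then have ex: "\<exists>n\<ge>1. P n" and n: "n = (LEAST n. 1 \<le> n \<and> P n)"
    unfolding first_ge1_def by (auto split: if_splits)
  from ex have "1 \<le> n \<and> P n" unfolding n by (metis (mono_tags, lifting) LeastI_ex)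
  moreover have "\<forall>m. 1 \<le> m \<and> m < n \<longrightarrow> \<not> P m"
    unfolding n using not_less_Least by blast
  ultimately show "1 \<le> n \<and> P n \<and> (\<forall>m. 1 \<le> m \<and> m < n \<longrightarrow> \<not> P m)" by blast
next
  assume a: "1 \<le> n \<and> P n \<and> (\<forall>m. 1 \<le> m \<and> m < n \<longrightarrow> \<not> P m)"
  then have "(LEAST n. 1 \<le> n \<and> P n) = n"
    by (intro Least_equality) (auto simp: not_less[symmetric])
  then show "first_ge1 P = enat n" using a unfolding first_ge1_def by auto
qed

lemma first_ge1_inf: "first_ge1 P = \<infinity> \<longleftrightarrow> (\<forall>n\<ge>1. \<not> P n)"
  unfolding first_ge1_def by auto

lemma first_ge1_ge1: "1 \<le> first_ge1 P"
  unfolding first_ge1_def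
  by (auto simp: one_enat_def) (metis (mono_tags, lifting) LeastI_ex)

locale iidseq = prob_space +
  fixes X :: "nat \<Rightarrow> 'a \<Rightarrow> real \<times> real \<times> real \<times> real"
  assumes X_meas[measurable]: "\<And>i. X i \<in> borel_measurable M"
  and X_indep: "indep_vars (\<lambda>_. borel) X {1..}"
  and X_ident: "\<And>i. i\<ge>1 \<Longrightarrow> distr M borel (X i) = distr M borel (X 1)"
begin

definition "E i = {X i -` A \<inter> space M | A. A \<in> sets borel}"

lemma gen_eq: "{X i -` A \<inter> space M | i A. i \<in> {1..n} \<and> A \<in> sets borel} = (\<Union>i\<in>{1..n}. E i)"
  unfolding E_def by blast

lemma E_events: "E i \<subseteq> sets M"
  unfolding E_def using X_meas by (auto intro: measurable_sets)

lemma sets_F: "sets (filt M X n) = sigma_sets (space M) (\<Union>i\<in>{1..n}. E i)"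
  unfolding filt_def gen_eq
  by (rule sets_measure_of) (use E_events sets.sets_into_space in blast)

lemma space_F: "space (filt M X n) = space M"
  unfolding filt_def gen_eq
  by (rule space_measure_of) (use E_events sets.sets_into_space in blast)

lemma F_mono: "m \<le> n \<Longrightarrow> sets (filt M X m) \<subseteq> sets (filt M X n)"
  unfolding sets_F by (rule sigma_sets_mono') (force)

lemma F_events: "sets (filt M X n) \<subseteq> sets M"
  unfolding sets_F by (rule sets.sigma_sets_subset) (use E_events in blast)

lemma X_F: "i \<in> {1..n} \<Longrightarrow> B \<in> sets borel \<Longrightarrow> X i -` B \<inter> space M \<in> sets (filt M X n)"
  unfolding sets_F E_def by (rule sigma_sets.Basic) blast

lemma X_F_meas: "i \<in> {1..n} \<Longrightarrow> X i \<in> measurable (filt M X n) borel"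
  unfolding measurable_def using X_F X_meas[of i] by (auto simp: space_F measurable_def)

lemma indep_F: "indep_set (sets (filt M X n)) (sigma_sets (space M) (E (Suc n)))"
proof -
  let ?I = "\<lambda>b. if b then {1..n} else {Suc n}"
  have i1: "indep_sets E {1..}"
    using X_indep unfolding indep_vars_def2 E_def by simp
  have i2: "indep_sets E (\<Union>j\<in>UNIV. ?I j)"
    by (rule indep_sets_mono_index[OF _ i1]) auto
  have "indep_sets (\<lambda>j. sigma_sets (space M) (\<Union>i\<in>?I j. E i)) UNIV"
  proof (rule indep_sets_collect_sigma[OF i2])
    show "Int_stable (E i)" for i
      unfolding E_def Int_stable_def
      by clarsimp (metis (no_types, lifting) Int_assoc inf_left_commute sets.Int vimage_Int inf.idem Int_commute)
    show "disjoint_family_on ?I UNIV"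
      unfolding disjoint_family_on_def by auto
  qed
  then show ?thesis
    unfolding indep_set_def sets_F
    by (rule indep_sets_cong[THEN iffD1, rotated 2]) (auto split: bool.split)
qed


lemma fst_borel: "(fst :: real \<times> (real\<times>real\<times>real) \<Rightarrow> real) \<in> borel_measurable borel"
  by (metis borel_prod measurable_fst)

lemma ident_nn:
  assumes "i \<ge> 1" and f[measurable]: "f \<in> borel_measurable borel"
  shows "(\<integral>\<^sup>+\<omega>. ennreal (f (X i \<omega>)) \<partial>M) = (\<integral>\<^sup>+\<omega>. ennreal (f (X 1 \<omega>)) \<partial>M)"
proof -
  have "(\<integral>\<^sup>+\<omega>. ennreal (f (X i \<omega>)) \<partial>M) = (\<integral>\<^sup>+x. ennreal (f x) \<partial>distr M borel (X i))"
    by (subst nn_integral_distr) auto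
  also have "\<dots> = (\<integral>\<^sup>+x. ennreal (f x) \<partial>distr M borel (X 1))"
    using X_ident[OF assms(1)] by simp
  also have "\<dots> = (\<integral>\<^sup>+\<omega>. ennreal (f (X 1 \<omega>)) \<partial>M)"
    by (subst nn_integral_distr) auto
  finally show ?thesis .
qed

lemma factor:
  assumes A: "A \<in> sets (filt M X n)" and f[measurable]: "f \<in> borel_measurable borel"
  shows "(\<integral>\<^sup>+\<omega>. ennreal (f (X (Suc n) \<omega>)) * indicator A \<omega> \<partial>M)
          = emeasure M A * (\<integral>\<^sup>+\<omega>. ennreal (f (X 1 \<omega>)) \<partial>M)"
proof -
  have AM: "A \<in> sets M" using A F_events by blast
  define IA where "IA \<omega> = (indicator A \<omega> :: real, 0::real, 0::real, 0::real)" for \<omega>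
  have ind_meas: "IA \<in> borel_measurable (filt M X n)"
    using A unfolding IA_def by simp
  have ind_measM[measurable]: "IA \<in> borel_measurable M"
    using AM unfolding IA_def by simp
  have sub: "sigma_sets (space M) {IA -` B \<inter> space M | B. B \<in> sets borel}
      \<subseteq> sets (filt M X n)"
  proof -
    have "{IA -` B \<inter> space M | B. B \<in> sets borel} \<subseteq> sets (filt M X n)"
      using measurable_sets[OF ind_meas] by (auto simp: space_F)
    then show ?thesis
      using sets.sigma_sets_subset[of _ "filt M X n"] by (simp add: space_F)
  qed
  have iv: "indep_var borel IA borel (X (Suc n))"
    unfolding indep_var_eq
  proof (intro conjI)
    show "random_variable borel IA" by simp
    show "random_variable borel (X (Suc n))" by simp
    have "indep_set (sets (filt M X n)) (sigma_sets (space M) (E (Suc n)))" by (rule indep_F)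
    then show "indep_set (sigma_sets (space M) {IA -` B \<inter> space M | B. B \<in> sets borel})
      (sigma_sets (space M) {X (Suc n) -` B \<inter> space M | B. B \<in> sets borel})"
      unfolding indep_set_def E_def
      by (rule indep_sets_mono_sets) (use sub in \<open>auto split: bool.split\<close>)
  qed
  define g where "g x = max 0 (f x)" for x
  have g[measurable]: "g \<in> borel_measurable borel" unfolding g_def by simp
  have iv2: "indep_var borel ((ennreal \<circ> fst) \<circ> IA) borel ((ennreal \<circ> g) \<circ> X (Suc n))"
    by (rule indep_var_compose[OF iv]) (use fst_borel in auto)
  define Y where "Y = case_bool ((ennreal \<circ> fst) \<circ> IA) ((ennreal \<circ> g) \<circ> X (Suc n))"
  have ivs: "indep_vars (\<lambda>_. borel) Y UNIV"
  proof -
    have **: "(\<lambda> _. borel) = case_bool (borel::ennreal measure) borel"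
      by (rule ext, metis (full_types) bool.simps(3) bool.simps(4))
    show ?thesis using iv2 unfolding indep_var_def Y_def ** by simp
  qed
  have "(\<integral>\<^sup>+\<omega>. (\<Prod>i\<in>UNIV. Y i \<omega>) \<partial>M) = (\<Prod>i\<in>UNIV. \<integral>\<^sup>+\<omega>. Y i \<omega> \<partial>M)"
    using indep_vars_nn_integral[of UNIV Y] ivs by (auto simp: Y_def g_def IA_def split: bool.split)
  moreover have "(\<lambda>\<omega>. (\<Prod>i\<in>UNIV. Y i \<omega>)) = (\<lambda>\<omega>. ennreal (f (X (Suc n) \<omega>)) * indicator A \<omega>)"
    by (auto simp: Y_def IA_def UNIV_bool g_def ennreal_mult'' ennreal_max_0 ennreal_indicator mult.commute)
  moreover have "(\<Prod>i\<in>UNIV. \<integral>\<^sup>+\<omega>. Y i \<omega> \<partial>M) = emeasure M A * (\<integral>\<^sup>+\<omega>. ennreal (f (X (Suc n) \<omega>)) \<partial>M)"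
    using AM by (simp add: Y_def IA_def UNIV_bool g_def o_def ennreal_max_0 ennreal_indicator mult.commute)
  ultimately show ?thesis
    using ident_nn[of "Suc n" f] by simp
qed


definition "SA N i = {\<omega>\<in>space M. enat (Suc i) \<le> N \<omega>}"

lemma SA_F:
  assumes N: "stop_time_ge1 M (filt M X) N"
  shows "SA N i \<in> sets (filt M X i)"
proof -
  have eq: "SA N i = space M - (\<Union>k\<in>{..i}. {\<omega>\<in>space M. N \<omega> = enat k})"
  proof -
    have "enat (Suc i) \<le> x \<longleftrightarrow> (\<forall>k\<le>i. x \<noteq> enat k)" for x :: enat
      by (cases x) (auto simp: not_less_eq_eq[symmetric])
    then show ?thesis unfolding SA_def by auto
  qed
  have "{\<omega>\<in>space M. N \<omega> = enat k} \<in> sets (filt M X i)" if "k \<le> i" for k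
    using N F_mono[OF that] unfolding stop_time_ge1_def by blast
  then show ?thesis unfolding eq
    using sets.top[of "filt M X i"] by (auto simp: space_F)
qed

lemma SA_M: "stop_time_ge1 M (filt M X) N \<Longrightarrow> SA N i \<in> sets M"
  using SA_F F_events by blast

lemma SA_mem: "\<omega> \<in> space M \<Longrightarrow> N \<omega> = enat n \<Longrightarrow> \<omega> \<in> SA N i \<longleftrightarrow> i < n"
  unfolding SA_def by auto

lemma suminf_SA:
  assumes "\<omega> \<in> space M" "N \<omega> = enat n"
  shows "(\<Sum>i. (g i :: ennreal) * indicator (SA N i) \<omega>) = (\<Sum>i<n. g i)"
  by (subst suminf_finite[of "{..<n}"]) (use assms SA_mem in auto)

lemma suminf_SA_inf:
  assumes "\<omega> \<in> space M" "N \<omega> = \<infinity>"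
  shows "(\<Sum>i. (g i :: ennreal) * indicator (SA N i) \<omega>) = (\<Sum>i. g i)"
  using assms unfolding SA_def by simp

lemma Ninf_sets:
  assumes N: "stop_time_ge1 M (filt M X) N"
  shows "{\<omega>\<in>space M. N \<omega> = \<infinity>} \<in> sets M"
proof -
  have "{\<omega>\<in>space M. N \<omega> = \<infinity>} = space M - (\<Union>n. {\<omega>\<in>space M. N \<omega> = enat n})"
    by auto
  moreover have "{\<omega>\<in>space M. N \<omega> = enat n} \<in> sets M" for n
    using N F_events unfolding stop_time_ge1_def by blast
  ultimately show ?thesis by auto
qed

lemma AE_fin:
  assumes N: "stop_time_ge1 M (filt M X) N"
    and f: "\<And>\<omega>. \<omega> \<in> space M \<Longrightarrow> N \<omega> = \<infinity> \<Longrightarrow> f \<omega> = \<top>"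
    and fin: "(\<integral>\<^sup>+\<omega>. f \<omega> \<partial>M) < \<top>"
  shows "AE \<omega> in M. N \<omega> \<noteq> \<infinity>"
proof -
  note S = Ninf_sets[OF N]
  have "\<top> * emeasure M {\<omega>\<in>space M. N \<omega> = \<infinity>} = (\<integral>\<^sup>+\<omega>. \<top> * indicator {\<omega>\<in>space M. N \<omega> = \<infinity>} \<omega> \<partial>M)"
    using S by (simp add: nn_integral_cmult_indicator)
  also have "\<dots> \<le> (\<integral>\<^sup>+\<omega>. f \<omega> \<partial>M)"
    by (intro nn_integral_mono) (auto simp: f split: split_indicator)
  finally have "\<top> * emeasure M {\<omega>\<in>space M. N \<omega> = \<infinity>} < \<top>" using fin by simp
  then have "emeasure M {\<omega>\<in>space M. N \<omega> = \<infinity>} = 0"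
    by (cases "emeasure M {\<omega>\<in>space M. N \<omega> = \<infinity>} = 0") (auto simp: ennreal_mult_eq_top_iff)
  then show ?thesis
    using AE_iff_measurable[OF S, of "\<lambda>\<omega>. N \<omega> \<noteq> \<infinity>"] by simp
qed

lemma wald:
  assumes N: "stop_time_ge1 M (filt M X) N" and f[measurable]: "f \<in> borel_measurable borel"
  shows "(\<integral>\<^sup>+\<omega>. (\<Sum>i. ennreal (f (X (Suc i) \<omega>)) * indicator (SA N i) \<omega>) \<partial>M)
        = (\<integral>\<^sup>+\<omega>. ennreal (f (X 1 \<omega>)) \<partial>M) * (\<integral>\<^sup>+\<omega>. (\<Sum>i. indicator (SA N i) \<omega>) \<partial>M)"
proof -
  note SAM[measurable] = SA_M[OF N]
  have "(\<integral>\<^sup>+\<omega>. (\<Sum>i. ennreal (f (X (Suc i) \<omega>)) * indicator (SA N i) \<omega>) \<partial>M)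
      = (\<Sum>i. \<integral>\<^sup>+\<omega>. ennreal (f (X (Suc i) \<omega>)) * indicator (SA N i) \<omega> \<partial>M)"
    by (rule nn_integral_suminf) simp
  also have "\<dots> = (\<Sum>i. emeasure M (SA N i) * (\<integral>\<^sup>+\<omega>. ennreal (f (X 1 \<omega>)) \<partial>M))"
    using factor[OF SA_F[OF N] f] by simp
  also have "\<dots> = (\<integral>\<^sup>+\<omega>. ennreal (f (X 1 \<omega>)) \<partial>M) * (\<Sum>i. emeasure M (SA N i))"
    by (simp add: mult.commute)
  also have "(\<Sum>i. emeasure M (SA N i)) = (\<integral>\<^sup>+\<omega>. (\<Sum>i. indicator (SA N i) \<omega>) \<partial>M)"
    by (subst nn_integral_suminf) auto
  finally show ?thesis .
qed


end

locale stopprob = iidseq +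
  fixes fR fC :: "real \<times> real \<times> real \<times> real \<Rightarrow> real" and D c0 :: real
  assumes fR_meas[measurable]: "fR \<in> borel_measurable borel"
  and fC_meas[measurable]: "fC \<in> borel_measurable borel"
  and D_pos: "D > 0"
  and fR_nn: "\<And>i \<omega>. i \<ge> 1 \<Longrightarrow> \<omega> \<in> space M \<Longrightarrow> 0 \<le> fR (X i \<omega>)"
  and fC_nn: "\<And>i. i \<ge> 1 \<Longrightarrow> AE \<omega> in M. 0 \<le> fC (X i \<omega>)"
  and fR_int: "integrable M (\<lambda>\<omega>. fR (X 1 \<omega>))"
  and fC_int: "integrable M (\<lambda>\<omega>. fC (X 1 \<omega>))"
  and c0_eq: "c0 = (\<integral>\<omega>. fC (X 1 \<omega>) \<partial>M)"
  and c0_pos: "c0 > 0"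
  and R_pos: "measure M {\<omega>\<in>space M. fR (X 1 \<omega>) > 0} > 0"
begin

definition "FF x = (\<integral>\<omega>. max (fR (X 1 \<omega>) - x * D) 0 \<partial>M)"

lemma FF_int: "integrable M (\<lambda>\<omega>. max (fR (X 1 \<omega>) - x * D) 0)"
  using fR_int by (intro integrable_max) auto

lemma FF_antimono: "x \<le> y \<Longrightarrow> FF y \<le> FF x"
  unfolding FF_def
proof (rule integral_mono[OF FF_int FF_int])
  fix \<omega> assume "x \<le> y"
  then have "x * D \<le> y * D" using D_pos by (simp add: mult_right_mono)
  then show "max (fR (X 1 \<omega>) - y * D) 0 \<le> max (fR (X 1 \<omega>) - x * D) 0" by (simp add: max_def)
qed

lemma FF_lip: "FF x \<le> FF y + D * \<bar>x - y\<bar>"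
proof -
  have "FF x \<le> (\<integral>\<omega>. max (fR (X 1 \<omega>) - y * D) 0 + D * \<bar>x - y\<bar> \<partial>M)"
    unfolding FF_def
  proof (intro integral_mono FF_int)
    show "integrable M (\<lambda>\<omega>. max (fR (X 1 \<omega>) - y * D) 0 + D * \<bar>x - y\<bar>)"
      using FF_int by auto
    fix \<omega>
    have "fR (X 1 \<omega>) - x * D \<le> fR (X 1 \<omega>) - y * D + D * \<bar>x - y\<bar>"
      using D_pos by (auto simp: abs_if algebra_simps)
    then show "max (fR (X 1 \<omega>) - x * D) 0 \<le> max (fR (X 1 \<omega>) - y * D) 0 + D * \<bar>x - y\<bar>"
      using D_pos by auto
  qed
  also have "\<dots> = FF y + D * \<bar>x - y\<bar>"
    unfolding FF_def using FF_int by (simp add: prob_space)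
  finally show ?thesis .
qed

lemma FF_cont: "continuous_on A FF"
proof (rule lipschitz_on_continuous_on)
  show "D-lipschitz_on A FF"
  proof (rule lipschitz_onI)
    fix x y
    show "dist (FF x) (FF y) \<le> D * dist x y"
      using FF_lip[of x y] FF_lip[of y x] by (auto simp: dist_real_def abs_minus_commute)
  qed (use D_pos in simp)
qed

lemma FF0: "FF 0 > 0"
proof -
  have nn: "AE \<omega> in M. 0 \<le> fR (X 1 \<omega>)" using fR_nn by auto
  have eq: "FF 0 = (\<integral>\<omega>. fR (X 1 \<omega>) \<partial>M)"
    unfolding FF_def using fR_nn by (intro Bochner_Integration.integral_cong) auto
  have ge: "FF 0 \<ge> 0" unfolding eq using nn by (simp add: integral_nonneg_AE)
  have "FF 0 \<noteq> 0"
  proof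
    assume "FF 0 = 0"
    then have "AE \<omega> in M. fR (X 1 \<omega>) = 0"
      using integral_nonneg_eq_0_iff_AE[OF fR_int nn] eq by simp
    then have "emeasure M {\<omega>\<in>space M. fR (X 1 \<omega>) > 0} = 0"
      by (intro emeasure_eq_0_AE) auto
    then have "measure M {\<omega>\<in>space M. fR (X 1 \<omega>) > 0} = 0"
      by (simp add: measure_def)
    then show False using R_pos by simp
  qed
  then show ?thesis using ge by simp
qed

lemma root: "\<exists>l>0. FF l = l * c0 \<and> (\<forall>x>0. FF x = x * c0 \<longleftrightarrow> x = l)"
proof -
  define H where "H x = x * c0 - FF x" for x
  have Hmono: "x < y \<Longrightarrow> H x < H y" for x y
    unfolding H_def using FF_antimono[of x y] c0_pos
    by (smt (verit) mult_strict_right_mono)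
  define b where "b = FF 0 / c0 + 1"
  have b: "b > 0" using FF0 c0_pos unfolding b_def by (simp add: add_pos_nonneg)
  have "H b \<ge> 0"
    unfolding H_def b_def using FF_antimono[of 0 "FF 0 / c0 + 1"] FF0 c0_pos b
    by (auto simp: b_def field_simps intro: mult_left_mono order_trans[OF _ add_increasing])
  moreover have "H 0 \<le> 0" unfolding H_def using FF0 by simp
  moreover have "continuous_on {0..b} H"
    unfolding H_def by (intro continuous_intros FF_cont)
  ultimately obtain l where l: "0 \<le> l" "l \<le> b" "H l = 0"
    using IVT'[of H 0 0 b] b by auto
  have "l \<noteq> 0" using l FF0 unfolding H_def by auto
  then have lpos: "l > 0" using l by simp
  have "\<forall>x>0. FF x = x * c0 \<longleftrightarrow> x = l"
  proof (intro allI impI iffI)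
    fix x assume "x > 0" "FF x = x * c0"
    then have "H x = 0" unfolding H_def by simp
    then show "x = l" using Hmono[of x l] Hmono[of l x] l by (cases "x < l"; cases "l < x") auto
  qed (use l in \<open>auto simp: H_def\<close>)
  then show ?thesis using lpos l unfolding H_def by auto
qed


definition "Rh n \<omega> = fR (X n \<omega>)"
definition "TT n \<omega> = (\<Sum>i=1..n. fC (X i \<omega>)) + D"
definition "EN N = (\<integral>\<^sup>+\<omega>. (\<Sum>i. indicator (SA N i) \<omega>) \<partial>M)"

lemma c0_nn: "(\<integral>\<^sup>+\<omega>. ennreal (fC (X 1 \<omega>)) \<partial>M) = ennreal c0"
  using nn_integral_eq_integral[OF fC_int] fC_nn[of 1] c0_eq by simp

lemma FF_nn: "(\<integral>\<^sup>+\<omega>. ennreal (max (fR (X 1 \<omega>) - x * D) 0) \<partial>M) = ennreal (FF x)"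
  unfolding FF_def using nn_integral_eq_integral[OF FF_int] by simp

lemma T_stopped:
  assumes N: "stop_time_ge1 M (filt M X) N" and fin: "AE \<omega> in M. N \<omega> \<noteq> \<infinity>"
  shows "(\<integral>\<^sup>+\<omega>. stopped TT N \<omega> \<partial>M) = ennreal D + ennreal c0 * EN N"
proof -
  note SAM[measurable] = SA_M[OF N]
  have AEnn: "AE \<omega> in M. \<forall>i. 0 \<le> fC (X (Suc i) \<omega>)"
    using fC_nn by (subst AE_all_countable) auto
  have "AE \<omega> in M. stopped TT N \<omega> = ennreal D + (\<Sum>i. ennreal (fC (X (Suc i) \<omega>)) * indicator (SA N i) \<omega>)"
    using AEnn fin AE_space
  proof eventually_elim
    case (elim \<omega>)
    then obtain n where n: "N \<omega> = enat n" by auto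
    have "stopped TT N \<omega> = ennreal ((\<Sum>i<n. fC (X (Suc i) \<omega>)) + D)"
      unfolding stopped_def TT_def using n by (simp add: sum.atLeast1_atMost_eq)
    also have "\<dots> = (\<Sum>i<n. ennreal (fC (X (Suc i) \<omega>))) + ennreal D"
      using elim D_pos by (simp add: sum_nonneg ennreal_plus)
    finally show ?case using suminf_SA[where N=N, OF elim(3) n] by (simp add: add.commute)
  qed
  then have "(\<integral>\<^sup>+\<omega>. stopped TT N \<omega> \<partial>M)
     = (\<integral>\<^sup>+\<omega>. ennreal D + (\<Sum>i. ennreal (fC (X (Suc i) \<omega>)) * indicator (SA N i) \<omega>) \<partial>M)"
    by (rule nn_integral_cong_AE)
  also have "\<dots> = ennreal D + (\<integral>\<^sup>+\<omega>. (\<Sum>i. ennreal (fC (X (Suc i) \<omega>)) * indicator (SA N i) \<omega>) \<partial>M)"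
    by (subst nn_integral_add) (auto simp: emeasure_space_1)
  also have "\<dots> = ennreal D + ennreal c0 * EN N"
    unfolding EN_def by (subst wald[OF N fC_meas]) (use c0_nn in simp)
  finally show ?thesis .
qed

lemma Umax_le:
  assumes "1 \<le> n" "0 \<le> v"
  shows "Umax Rh n \<omega> \<le> v + (\<Sum>i<n. max (fR (X (Suc i) \<omega>) - v) 0)"
proof -
  have "Umax Rh n \<omega> \<le> v + (\<Sum>i\<in>{1..n}. max (fR (X i \<omega>) - v) 0)"
  proof -
    have "Rh i \<omega> \<le> v + (\<Sum>i = 1..n. max (fR (X i \<omega>) - v) 0)" if i: "i \<in> {1..n}" for i
    proof -
      have "max (fR (X i \<omega>) - v) 0 \<le> (\<Sum>i\<in>{1..n}. max (fR (X i \<omega>) - v) 0)"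
        by (rule member_le_sum) (use i in auto)
      then show ?thesis unfolding Rh_def by linarith
    qed
    then show ?thesis unfolding Umax_def by (intro Max.boundedI) (use assms in auto)
  qed
  then show ?thesis by (simp add: sum.atLeast1_atMost_eq)
qed

lemma U_le:
  assumes N: "stop_time_ge1 M (filt M X) N" and fin: "AE \<omega> in M. N \<omega> \<noteq> \<infinity>" and x: "0 \<le> x"
  shows "(\<integral>\<^sup>+\<omega>. stopped (Umax Rh) N \<omega> \<partial>M) \<le> ennreal (x * D) + ennreal (FF x) * EN N"
proof -
  note SAM[measurable] = SA_M[OF N]
  define v where "v = x * D"
  have v: "0 \<le> v" using x D_pos unfolding v_def by simp
  have "AE \<omega> in M. stopped (Umax Rh) N \<omega> \<le> ennreal v + (\<Sum>i. ennreal (max (fR (X (Suc i) \<omega>) - v) 0) * indicator (SA N i) \<omega>)"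
    using fin AE_space
  proof eventually_elim
    case (elim \<omega>)
    then obtain n where n: "N \<omega> = enat n" by auto
    have n1: "1 \<le> n" using N elim n unfolding stop_time_ge1_def by (auto simp: one_enat_def)
    have "stopped (Umax Rh) N \<omega> \<le> ennreal (v + (\<Sum>i<n. max (fR (X (Suc i) \<omega>) - v) 0))"
      unfolding stopped_def using n Umax_le[OF n1 v] by (simp add: ennreal_leI)
    also have "\<dots> = ennreal v + (\<Sum>i<n. ennreal (max (fR (X (Suc i) \<omega>) - v) 0))"
    proof -
      have "(\<Sum>i<n. ennreal (max (fR (X (Suc i) \<omega>) - v) 0)) = ennreal (\<Sum>i<n. max (fR (X (Suc i) \<omega>) - v) 0)"
        by (rule sum_ennreal) simp
      then show ?thesis using v by (simp add: sum_nonneg ennreal_plus del: sum_ennreal ennreal_max_0)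
    qed
    finally show ?case using suminf_SA[where N=N, OF elim(2) n] by simp
  qed
  then have "(\<integral>\<^sup>+\<omega>. stopped (Umax Rh) N \<omega> \<partial>M)
     \<le> (\<integral>\<^sup>+\<omega>. ennreal v + (\<Sum>i. ennreal (max (fR (X (Suc i) \<omega>) - v) 0) * indicator (SA N i) \<omega>) \<partial>M)"
    by (rule nn_integral_mono_AE)
  also have "\<dots> = ennreal v + (\<integral>\<^sup>+\<omega>. (\<Sum>i. ennreal (max (fR (X (Suc i) \<omega>) - v) 0) * indicator (SA N i) \<omega>) \<partial>M)"
    by (subst nn_integral_add) (auto simp: emeasure_space_1)
  also have "\<dots> = ennreal v + ennreal (FF x) * EN N"
    unfolding EN_def
    by (subst wald[OF N, where f="\<lambda>y. max (fR y - v) 0"]) (use FF_nn[of x] in \<open>auto simp: v_def\<close>)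
  finally show ?thesis unfolding v_def .
qed


definition "Ns v \<omega> = first_ge1 (\<lambda>n. v \<le> fR (X n \<omega>))"

lemma Ns_stop: "stop_time_ge1 M (filt M X) (Ns v)"
  unfolding stop_time_ge1_def
proof (intro conjI ballI allI)
  show "1 \<le> Ns v \<omega>" for \<omega> unfolding Ns_def by (rule first_ge1_ge1)
  fix n
  define B where "B = {x. v \<le> fR x}"
  have B: "B \<in> sets borel" unfolding B_def by measurable
  show "{\<omega> \<in> space M. Ns v \<omega> = enat n} \<in> sets (filt M X n)"
  proof (cases "n = 0")
    case True
    then show ?thesis unfolding Ns_def first_ge1_enat by simp
  next
    case False
    have "{\<omega> \<in> space M. Ns v \<omega> = enat n} =
       (space M - (\<Union>i\<in>{1..<n}. X i -` B \<inter> space M)) \<inter> (X n -` B \<inter> space M)"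
      using False unfolding Ns_def first_ge1_enat B_def by auto
    moreover have XB: "X i -` B \<inter> space M \<in> sets (filt M X n)" if "i \<in> {1..n}" for i
      by (rule X_F[OF that B])
    moreover have "(\<Union>i\<in>{1..<n}. X i -` B \<inter> space M) \<in> sets (filt M X n)"
      by (intro sets.finite_UN XB) auto
    then have D1: "space M - (\<Union>i\<in>{1..<n}. X i -` B \<inter> space M) \<in> sets (filt M X n)"
      using sets.top[of "filt M X n"] sets.Diff unfolding space_F by blast
    have D2: "X n -` B \<inter> space M \<in> sets (filt M X n)" using False by (intro XB) auto
    ultimately show ?thesis
      using sets.Int[OF D1 D2] by simp
  qed
qed

lemma Ns_EN:
  assumes p: "emeasure M {\<omega>\<in>space M. v \<le> fR (X 1 \<omega>)} > 0"
  shows "EN (Ns v) < \<top>"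
proof -
  note N = Ns_stop[of v]
  note SAM[measurable] = SA_M[OF N]
  define f where "f x = (if v \<le> fR x then 1 else 0::real)" for x
  have f[measurable]: "f \<in> borel_measurable borel" unfolding f_def by measurable
  have pw: "(\<Sum>i. ennreal (f (X (Suc i) \<omega>)) * indicator (SA (Ns v) i) \<omega>) \<le> 1" if \<omega>: "\<omega> \<in> space M" for \<omega>
  proof (cases "Ns v \<omega>")
    case (enat n)
    then have n: "1 \<le> n" "v \<le> fR (X n \<omega>)" "\<forall>m. 1 \<le> m \<and> m < n \<longrightarrow> \<not> v \<le> fR (X m \<omega>)"
      unfolding Ns_def first_ge1_enat by auto
    then obtain m where m: "n = Suc m" by (cases n) auto
    have "(\<Sum>i. ennreal (f (X (Suc i) \<omega>)) * indicator (SA (Ns v) i) \<omega>) = (\<Sum>i<Suc m. ennreal (f (X (Suc i) \<omega>)))"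
      using suminf_SA[where N="Ns v", OF \<omega> enat] m by simp
    also have "\<dots> = (\<Sum>i<m. ennreal (f (X (Suc i) \<omega>))) + ennreal (f (X (Suc m) \<omega>))" by simp
    also have "(\<Sum>i<m. ennreal (f (X (Suc i) \<omega>))) = 0"
      using n(3) m by (auto simp: f_def)
    finally show ?thesis by (simp add: f_def)
  next
    case infinity
    then have "\<forall>n\<ge>1. \<not> v \<le> fR (X n \<omega>)" unfolding Ns_def first_ge1_inf .
    then show ?thesis using suminf_SA_inf[where N="Ns v", OF \<omega> infinity] by (simp add: f_def)
  qed
  have "(\<integral>\<^sup>+\<omega>. ennreal (f (X 1 \<omega>)) \<partial>M) * EN (Ns v)
      = (\<integral>\<^sup>+\<omega>. (\<Sum>i. ennreal (f (X (Suc i) \<omega>)) * indicator (SA (Ns v) i) \<omega>) \<partial>M)"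
    unfolding EN_def by (rule wald[OF N f, symmetric])
  also have "\<dots> \<le> (\<integral>\<^sup>+\<omega>. 1 \<partial>M)"
    by (rule nn_integral_mono) (rule pw)
  also have "\<dots> = 1" by (simp add: emeasure_space_1)
  finally have le: "(\<integral>\<^sup>+\<omega>. ennreal (f (X 1 \<omega>)) \<partial>M) * EN (Ns v) \<le> 1" .
  have "(\<integral>\<^sup>+\<omega>. ennreal (f (X 1 \<omega>)) \<partial>M) = (\<integral>\<^sup>+\<omega>. indicator {\<omega>\<in>space M. v \<le> fR (X 1 \<omega>)} \<omega> \<partial>M)"
    by (intro nn_integral_cong) (auto simp: f_def)
  also have "\<dots> = emeasure M {\<omega>\<in>space M. v \<le> fR (X 1 \<omega>)}" by simp
  finally have "emeasure M {\<omega>\<in>space M. v \<le> fR (X 1 \<omega>)} * EN (Ns v) \<le> 1" using le by simp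
  then show ?thesis using p
    by (metis ennreal_mult_eq_top_iff ennreal_one_less_top linorder_not_le order_less_le top.not_eq_extremum)
qed

lemma Ns_fin:
  assumes "EN (Ns v) < \<top>"
  shows "AE \<omega> in M. Ns v \<omega> \<noteq> \<infinity>"
proof (rule AE_fin[OF Ns_stop])
  show "(\<integral>\<^sup>+\<omega>. (\<Sum>i. indicator (SA (Ns v) i) \<omega>) \<partial>M) < \<top>" using assms unfolding EN_def .
  fix \<omega> assume "\<omega> \<in> space M" "Ns v \<omega> = \<infinity>"
  then show "(\<Sum>i. indicator (SA (Ns v) i) \<omega> :: ennreal) = \<top>"
    using suminf_SA_inf[where N="Ns v" and g="\<lambda>_. 1"] suminf_one by simp
qed

lemma U_Ns:
  assumes fin: "AE \<omega> in M. Ns (x * D) \<omega> \<noteq> \<infinity>" and x: "0 \<le> x"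
  shows "(\<integral>\<^sup>+\<omega>. stopped (Umax Rh) (Ns (x * D)) \<omega> \<partial>M) = ennreal (x * D) + ennreal (FF x) * EN (Ns (x * D))"
proof -
  define v where "v = x * D"
  note N = Ns_stop[of v]
  note SAM[measurable] = SA_M[OF N]
  have v: "0 \<le> v" using x D_pos unfolding v_def by simp
  have "AE \<omega> in M. stopped (Umax Rh) (Ns v) \<omega> = ennreal v + (\<Sum>i. ennreal (max (fR (X (Suc i) \<omega>) - v) 0) * indicator (SA (Ns v) i) \<omega>)"
    using fin AE_space unfolding v_def[symmetric]
  proof eventually_elim
    case (elim \<omega>)
    then obtain n where en: "Ns v \<omega> = enat n" by auto
    then have n: "1 \<le> n" "v \<le> fR (X n \<omega>)" "\<forall>m. 1 \<le> m \<and> m < n \<longrightarrow> \<not> v \<le> fR (X m \<omega>)"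
      unfolding Ns_def first_ge1_enat by auto
    then obtain m where m: "n = Suc m" by (cases n) auto
    have U: "Umax Rh n \<omega> = fR (X n \<omega>)"
      unfolding Umax_def
    proof (rule Max_eqI)
      show "fR (X n \<omega>) \<in> (\<lambda>i. Rh i \<omega>) ` {1..n}" using n(1) unfolding Rh_def by auto
      fix y assume "y \<in> (\<lambda>i. Rh i \<omega>) ` {1..n}"
      then obtain i where i: "i \<in> {1..n}" "y = fR (X i \<omega>)" unfolding Rh_def by auto
      show "y \<le> fR (X n \<omega>)"
      proof (cases "i = n")
        case False
        then have "fR (X i \<omega>) < v" using n(3) i by force
        then show ?thesis using i n(2) by simp
      qed (use i in simp)
    qed simp
    have S: "(\<Sum>i<n. ennreal (max (fR (X (Suc i) \<omega>) - v) 0)) = ennreal (fR (X n \<omega>) - v)"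
    proof -
      have "\<forall>i<m. max (fR (X (Suc i) \<omega>) - v) 0 = 0"
        using n(3) m by (auto simp: max_def not_le)
      then have "(\<Sum>i<m. ennreal (max (fR (X (Suc i) \<omega>) - v) 0)) = 0"
        by simp
      then show ?thesis using m n(2) by simp
    qed
    have "stopped (Umax Rh) (Ns v) \<omega> = ennreal (v + (fR (X n \<omega>) - v))"
      unfolding stopped_def using en U by simp
    also have "\<dots> = ennreal v + ennreal (fR (X n \<omega>) - v)"
      using v n(2) by (simp add: ennreal_plus[symmetric])
    finally show ?case using suminf_SA[where N="Ns v", OF elim(2) en] S by simp
  qed
  then have "(\<integral>\<^sup>+\<omega>. stopped (Umax Rh) (Ns v) \<omega> \<partial>M)
     = (\<integral>\<^sup>+\<omega>. ennreal v + (\<Sum>i. ennreal (max (fR (X (Suc i) \<omega>) - v) 0) * indicator (SA (Ns v) i) \<omega>) \<partial>M)"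
    by (rule nn_integral_cong_AE)
  also have "\<dots> = ennreal v + (\<integral>\<^sup>+\<omega>. (\<Sum>i. ennreal (max (fR (X (Suc i) \<omega>) - v) 0) * indicator (SA (Ns v) i) \<omega>) \<partial>M)"
    by (subst nn_integral_add) (auto simp: emeasure_space_1)
  also have "\<dots> = ennreal v + ennreal (FF x) * EN (Ns v)"
    unfolding EN_def
    by (subst wald[OF N, where f="\<lambda>y. max (fR y - v) 0"]) (use FF_nn[of x] in \<open>auto simp: v_def\<close>)
  finally show ?thesis unfolding v_def .
qed


definition "lam0 = (SOME l. l>0 \<and> FF l = l * c0 \<and> (\<forall>x>0. FF x = x * c0 \<longleftrightarrow> x = l))"

lemma lam0: "lam0 > 0" "FF lam0 = lam0 * c0" "\<And>x. x > 0 \<Longrightarrow> FF x = x * c0 \<longleftrightarrow> x = lam0"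
  using someI_ex[OF root] unfolding lam0_def[symmetric] by auto

lemma key_ineq:
  assumes "(\<integral>\<^sup>+\<omega>. stopped TT N \<omega> \<partial>M) = ennreal D + ennreal c0 * EN N"
  shows "ennreal (lam0 * D) + ennreal (FF lam0) * EN N = ennreal lam0 * (\<integral>\<^sup>+\<omega>. stopped TT N \<omega> \<partial>M)"
  unfolding assms lam0(2) using lam0(1) D_pos c0_pos
  by (simp add: ennreal_mult distrib_left mult.assoc)

lemma T_pos: "(\<integral>\<^sup>+\<omega>. stopped TT N \<omega> \<partial>M) = ennreal D + ennreal c0 * EN N \<Longrightarrow> (\<integral>\<^sup>+\<omega>. stopped TT N \<omega> \<partial>M) \<noteq> 0"
  using D_pos by simp

lemma rate_le:
  assumes "N \<in> classC M (filt M X) TT"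
  shows "rate M (Umax Rh) TT N \<le> ennreal lam0"
proof -
  have N: "stop_time_ge1 M (filt M X) N" and fin: "(\<integral>\<^sup>+\<omega>. stopped TT N \<omega> \<partial>M) < \<top>"
    using assms unfolding classC_def by auto
  have AEf: "AE \<omega> in M. N \<omega> \<noteq> \<infinity>"
    by (rule AE_fin[OF N _ fin]) (simp add: stopped_def)
  note T = T_stopped[OF N AEf]
  have "(\<integral>\<^sup>+\<omega>. stopped (Umax Rh) N \<omega> \<partial>M) \<le> ennreal lam0 * (\<integral>\<^sup>+\<omega>. stopped TT N \<omega> \<partial>M)"
    using U_le[OF N AEf, of lam0] lam0(1) key_ineq[OF T] by simp
  then have "rate M (Umax Rh) TT N \<le> ennreal lam0 * (\<integral>\<^sup>+\<omega>. stopped TT N \<omega> \<partial>M) / (\<integral>\<^sup>+\<omega>. stopped TT N \<omega> \<partial>M)"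
    unfolding rate_def by (rule divide_right_mono_ennreal)
  also have "\<dots> = ennreal lam0"
    using T_pos[OF T] fin by (intro mult_divide_eq_ennreal) auto
  finally show ?thesis .
qed

lemma Ns_opt:
  "Ns (lam0 * D) \<in> classC M (filt M X) TT \<and> rate M (Umax Rh) TT (Ns (lam0 * D)) = ennreal lam0"
proof -
  define v where "v = lam0 * D"
  have p: "emeasure M {\<omega>\<in>space M. v \<le> fR (X 1 \<omega>)} > 0"
  proof (rule ccontr)
    assume "\<not> ?thesis"
    then have "emeasure M {\<omega>\<in>space M. v \<le> fR (X 1 \<omega>)} = 0" by simp
    then have "AE \<omega> in M. \<not> v \<le> fR (X 1 \<omega>)"
      by (subst AE_iff_measurable[where N="{\<omega>\<in>space M. v \<le> fR (X 1 \<omega>)}"]) auto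
    then have "AE \<omega> in M. max (fR (X 1 \<omega>) - lam0 * D) 0 = 0"
      by eventually_elim (auto simp: v_def)
    then have "FF lam0 = 0" unfolding FF_def by (rule integral_eq_zero_AE)
    then show False using lam0(1,2) c0_pos by simp
  qed
  note N = Ns_stop[of v]
  note EN = Ns_EN[OF p]
  note AEf = Ns_fin[OF EN]
  note T = T_stopped[OF N AEf]
  have fin: "(\<integral>\<^sup>+\<omega>. stopped TT (Ns v) \<omega> \<partial>M) < \<top>"
    unfolding T using EN by (simp add: ennreal_mult_less_top)
  have C: "Ns v \<in> classC M (filt M X) TT" unfolding classC_def using N fin by simp
  have U: "(\<integral>\<^sup>+\<omega>. stopped (Umax Rh) (Ns v) \<omega> \<partial>M) = ennreal lam0 * (\<integral>\<^sup>+\<omega>. stopped TT (Ns v) \<omega> \<partial>M)"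
    using U_Ns[of lam0] AEf lam0(1) key_ineq[OF T] unfolding v_def by simp
  have "rate M (Umax Rh) TT (Ns v) = ennreal lam0"
    unfolding rate_def U using T_pos[OF T] fin by (intro mult_divide_eq_ennreal) auto
  then show ?thesis using C unfolding v_def by simp
qed

lemma SUP_rate: "(SUP N\<in>classC M (filt M X) TT. rate M (Umax Rh) TT N) = ennreal lam0"
proof (rule antisym)
  show "(SUP N\<in>classC M (filt M X) TT. rate M (Umax Rh) TT N) \<le> ennreal lam0"
    by (rule SUP_least) (rule rate_le)
  show "ennreal lam0 \<le> (SUP N\<in>classC M (filt M X) TT. rate M (Umax Rh) TT N)"
    using Ns_opt by (metis SUP_upper)
qed

end



lemma comp_meas:
  fixes f :: "'a \<Rightarrow> real \<times> real \<times> real \<times> real"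
  assumes "f \<in> borel_measurable M"
  shows "(\<lambda>\<omega>. fst (f \<omega>)) \<in> borel_measurable M" "(\<lambda>\<omega>. fst (snd (f \<omega>))) \<in> borel_measurable M"
        "(\<lambda>\<omega>. fst (snd (snd (f \<omega>)))) \<in> borel_measurable M" "(\<lambda>\<omega>. snd (snd (snd (f \<omega>)))) \<in> borel_measurable M"
  using assms by (simp_all add: borel_prod[symmetric] del: borel_prod)

lemma sum_real_lessThan: "(\<Sum>j<K. real j) = real K * (real K - 1) / 2"
  by (induction K) (auto simp: field_simps)

theorem proposition2:
  fixes M :: "'a measure"
    and SNR beta Y Z :: "nat \<Rightarrow> 'a \<Rightarrow> real"
    and Tsyn Tsib Tra Tdata W \<Gamma> :: real and L K :: nat
  assumes "prob_space M"
    and "Tsyn > 0" and "Tsib \<ge> Tsyn" and "K \<ge> 1" and "Tsib = real K * Tsyn"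
    and "Tra > 0" and "Tdata > 0" and "W > 0" and "L \<ge> 1"
    and meas: "\<And>i. obs SNR beta Y Z i \<in> borel_measurable M"
    and indep: "prob_space.indep_vars M (\<lambda>_. borel) (obs SNR beta Y Z) {1..}"
    and ident: "\<And>i. i \<ge> 1 \<Longrightarrow> distr M borel (obs SNR beta Y Z i) = distr M borel (obs SNR beta Y Z 1)"
    and SNR_nn: "\<And>i \<omega>. i \<ge> 1 \<Longrightarrow> \<omega> \<in> space M \<Longrightarrow> SNR i \<omega> \<ge> 0"
    and beta_01: "\<And>i \<omega>. i \<ge> 1 \<Longrightarrow> \<omega> \<in> space M \<Longrightarrow> 0 \<le> beta i \<omega> \<and> beta i \<omega> \<le> 1"
    and Y_nn: "\<And>i \<omega>. i \<ge> 1 \<Longrightarrow> \<omega> \<in> space M \<Longrightarrow> Y i \<omega> \<ge> 0"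
    and Y_mean: "\<And>i. i \<ge> 1 \<Longrightarrow> integrable M (Y i) \<and> (\<integral>\<omega>. Y i \<omega> \<partial>M) = Tsyn / 2"
    and Z_unif: "\<And>i j. i \<ge> 1 \<Longrightarrow> j < K \<Longrightarrow>
                   measure M {\<omega> \<in> space M. Z i \<omega> = real j * Tsyn} = 1 / real K"
    and Z_indep: "\<And>i. i \<ge> 1 \<Longrightarrow> prob_space.indep_var M borel (Z i) borel (SNR i)"
    and R_sq: "integrable M (\<lambda>\<omega>. (Rsel beta SNR 1 \<omega>)\<^sup>2)"
    and R_pos: "measure M {\<omega> \<in> space M. Rsel beta SNR 1 \<omega> * ind (SNR 1 \<omega> \<ge> \<Gamma>) > 0} > 0"
  shows "let Rh = Rhat W Tdata \<Gamma> beta SNR;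
             T = Ttime Tsyn L Tra Tdata \<Gamma> SNR Y Z;
             U = Umax Rh;
             C = classC M (filt M (obs SNR beta Y Z)) T;
             lam = (SUP N\<in>C. rate M U T N);
             l = enn2real lam;
             Nstar = (\<lambda>\<omega>. first_ge1 (\<lambda>n. Rsel beta SNR n \<omega> * ind (SNR n \<omega> \<ge> \<Gamma>)
                                        \<ge> l * (Tra + Tdata) / (W * Tdata)))
         in lam < \<top> \<and> 0 < l \<and> Nstar \<in> C \<and> rate M U T Nstar = lam \<and>
            (\<forall>x>0. (\<integral>\<omega>. max (Rh 1 \<omega> - x * (Tra + Tdata)) 0 \<partial>M)
                     = x * ((real L - 1/2) * Tsyn + (Tsib - Tsyn) / 2 * measure M {\<omega> \<in> space M. SNR 1 \<omega> \<ge> \<Gamma>})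
                   \<longleftrightarrow> x = l)"
  proof -
  interpret prob_space M by fact
  have mSNR[measurable]: "SNR i \<in> borel_measurable M" for i
    using comp_meas(1)[OF meas[of i]] by (simp add: obs_def)
  have mbeta[measurable]: "beta i \<in> borel_measurable M" for i
    using comp_meas(2)[OF meas[of i]] by (simp add: obs_def)
  have mY[measurable]: "Y i \<in> borel_measurable M" for i
    using comp_meas(3)[OF meas[of i]] by (simp add: obs_def)
  have mZ[measurable]: "Z i \<in> borel_measurable M" for i
    using comp_meas(4)[OF meas[of i]] by (simp add: obs_def)
  have Kpos: "real K > 0" using \<open>K \<ge> 1\<close> by simp
  define X where "X = obs SNR beta Y Z"
  define fR :: "real \<times> real \<times> real \<times> real \<Rightarrow> real"
    where "fR = (\<lambda>(s,b,y,z). W * Tdata * (b * ln (1 + s)) * ind (s \<ge> \<Gamma>))"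
  define fC :: "real \<times> real \<times> real \<times> real \<Rightarrow> real"
    where "fC = (\<lambda>(s,b,y,z). y + (real L - 1) * Tsyn + z * ind (s \<ge> \<Gamma>))"
  define D where "D = Tra + Tdata"
  define P where "P = measure M {\<omega>\<in>space M. SNR 1 \<omega> \<ge> \<Gamma>}"
  define c0 where "c0 = (real L - 1/2) * Tsyn + (Tsib - Tsyn) / 2 * P"
  have fRX: "fR (X i \<omega>) = Rhat W Tdata \<Gamma> beta SNR i \<omega>" for i \<omega>
    by (simp add: fR_def X_def obs_def Rhat_def Rsel_def)
  have fCX: "fC (X i \<omega>) = Y i \<omega> + (real L - 1) * Tsyn + Z i \<omega> * ind (SNR i \<omega> \<ge> \<Gamma>)" for i \<omega>
    by (simp add: fC_def X_def obs_def)
  have mfR[measurable]: "fR \<in> borel_measurable borel"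
    unfolding fR_def ind_def by (simp add: borel_prod[symmetric] del: borel_prod)
  have mfC[measurable]: "fC \<in> borel_measurable borel"
    unfolding fC_def ind_def by (simp add: borel_prod[symmetric] del: borel_prod)
  define A where "A i j = {\<omega>\<in>space M. Z i \<omega> = real j * Tsyn}" for i j
  have Asets[measurable]: "A i j \<in> sets M" for i j unfolding A_def by measurable
  have Adisj: "disjoint_family_on (A i) {..<K}" for i
    unfolding disjoint_family_on_def A_def using \<open>Tsyn > 0\<close> by auto
  have Zval: "AE \<omega> in M. \<omega> \<in> (\<Union>j<K. A i j)" if i: "i \<ge> 1" for i
  proof (rule AE_prob_1)
    have "prob (\<Union>j<K. A i j) = (\<Sum>j<K. prob (A i j))"
      by (rule finite_measure_finite_Union) (auto simp: Adisj)
    also have "\<dots> = 1" using Z_unif[OF i] Kpos unfolding A_def by simp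
    finally show "prob (\<Union>j<K. A i j) = 1" .
  qed
  have Z_nn: "AE \<omega> in M. 0 \<le> Z i \<omega>" if "i \<ge> 1" for i
    using Zval[OF that] by eventually_elim (use \<open>Tsyn > 0\<close> in \<open>auto simp: A_def\<close>)
  have Zsum: "AE \<omega> in M. Z 1 \<omega> = (\<Sum>j<K. real j * Tsyn * indicator (A 1 j) \<omega>)"
    using Zval[of 1, OF order_refl]
  proof eventually_elim
    case (elim \<omega>)
    then obtain j0 where j0: "j0 < K" "\<omega> \<in> A 1 j0" by auto
    have "(\<Sum>j<K. real j * Tsyn * indicator (A 1 j) \<omega>) = (\<Sum>j<K. if j = j0 then real j * Tsyn else 0)"
      using j0 \<open>Tsyn > 0\<close> by (intro sum.cong) (auto simp: A_def split: split_indicator)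
    also have "\<dots> = real j0 * Tsyn" using j0 by simp
    finally show ?case using j0 by (simp add: A_def)
  qed
  have Sint: "integrable M (\<lambda>\<omega>. \<Sum>j<K. real j * Tsyn * indicator (A 1 j) \<omega>)"
    by (rule Bochner_Integration.integrable_sum[where f="\<lambda>j \<omega>. real j * Tsyn * indicator (A 1 j) \<omega>"]) (auto intro!: integrable_mult_right integrable_real_indicator Asets simp: less_top[symmetric])
  have "integrable M (Z 1) = integrable M (\<lambda>\<omega>. \<Sum>j<K. real j * Tsyn * indicator (A 1 j) \<omega>)"
    by (rule integrable_cong_AE[OF _ _ Zsum]) measurable
  then have Zint: "integrable M (Z 1)" using Sint by simp
  have ZE: "(\<integral>\<omega>. Z 1 \<omega> \<partial>M) = (Tsib - Tsyn) / 2"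
  proof -
    have "(\<integral>\<omega>. Z 1 \<omega> \<partial>M) = (\<integral>\<omega>. (\<Sum>j<K. real j * Tsyn * indicator (A 1 j) \<omega>) \<partial>M)"
      by (rule integral_cong_AE[OF _ _ Zsum]) measurable
    also have "\<dots> = (\<Sum>j<K. (\<integral>\<omega>. real j * Tsyn * indicator (A 1 j) \<omega> \<partial>M))"
      by (rule Bochner_Integration.integral_sum) (auto intro!: integrable_mult_right integrable_real_indicator Asets simp: less_top[symmetric])
    also have "\<dots> = (\<Sum>j<K. real j * Tsyn * prob (A 1 j))"
      by (intro sum.cong refl) simp
    also have "\<dots> = (\<Sum>j<K. real j) * Tsyn / real K"
      using Z_unif[of 1] unfolding A_def by (simp add: sum_distrib_right sum_divide_distrib)
    also have "\<dots> = (Tsib - Tsyn) / 2"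
      using Kpos \<open>Tsib = real K * Tsyn\<close> by (simp add: sum_real_lessThan field_simps)
    finally show ?thesis .
  qed
  have mR[measurable]: "Rsel beta SNR i \<in> borel_measurable M" for i
    unfolding Rsel_def by measurable
  have Rint: "integrable M (Rsel beta SNR 1)"
    by (rule square_integrable_imp_integrable) (use R_sq in auto)
  have ind01: "0 \<le> ind b" "ind b \<le> 1" for b unfolding ind_def by auto
  have fR_int: "integrable M (\<lambda>\<omega>. fR (X 1 \<omega>))"
  proof -
    have "integrable M (\<lambda>\<omega>. Rsel beta SNR 1 \<omega> * ind (SNR 1 \<omega> \<ge> \<Gamma>))"
    proof (rule Bochner_Integration.integrable_bound[OF Rint])
      show "(\<lambda>\<omega>. Rsel beta SNR 1 \<omega> * ind (\<Gamma> \<le> SNR 1 \<omega>)) \<in> borel_measurable M"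
        unfolding ind_def by measurable
      show "AE \<omega> in M. norm (Rsel beta SNR 1 \<omega> * ind (\<Gamma> \<le> SNR 1 \<omega>)) \<le> norm (Rsel beta SNR 1 \<omega>)"
        by (auto simp: ind_def)
    qed
    then have "integrable M (\<lambda>\<omega>. (W * Tdata) * (Rsel beta SNR 1 \<omega> * ind (SNR 1 \<omega> \<ge> \<Gamma>)))"
      by (rule integrable_mult_right)
    then show ?thesis unfolding fRX Rhat_def by (simp add: mult.assoc)
  qed
  have ZIint: "integrable M (\<lambda>\<omega>. Z 1 \<omega> * ind (SNR 1 \<omega> \<ge> \<Gamma>))"
  proof (rule Bochner_Integration.integrable_bound[OF Zint])
    show "(\<lambda>\<omega>. Z 1 \<omega> * ind (\<Gamma> \<le> SNR 1 \<omega>)) \<in> borel_measurable M"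
      unfolding ind_def by measurable
    show "AE \<omega> in M. norm (Z 1 \<omega> * ind (\<Gamma> \<le> SNR 1 \<omega>)) \<le> norm (Z 1 \<omega>)"
      by (auto simp: ind_def)
  qed
  have Yint: "integrable M (Y 1)" using Y_mean[of 1] by simp
  have fC_int: "integrable M (\<lambda>\<omega>. fC (X 1 \<omega>))"
    unfolding fCX using Yint ZIint by auto
  have EZI: "(\<integral>\<omega>. Z 1 \<omega> * ind (SNR 1 \<omega> \<ge> \<Gamma>) \<partial>M) = (Tsib - Tsyn) / 2 * P"
  proof -
    have g: "(\<lambda>s::real. ind (\<Gamma> \<le> s)) \<in> borel_measurable borel" unfolding ind_def by measurable
    have iv: "indep_var borel (id \<circ> Z 1) borel ((\<lambda>s. ind (\<Gamma> \<le> s)) \<circ> SNR 1)"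
      by (rule indep_var_compose[OF Z_indep[of 1] _ g]) auto
    have Iint: "integrable M (\<lambda>\<omega>. ind (\<Gamma> \<le> SNR 1 \<omega>))"
      by (rule integrable_const_bound[where B=1]) (auto simp: ind_def)
    have "(\<integral>\<omega>. Z 1 \<omega> * ind (SNR 1 \<omega> \<ge> \<Gamma>) \<partial>M)
        = (\<integral>\<omega>. Z 1 \<omega> \<partial>M) * (\<integral>\<omega>. ind (SNR 1 \<omega> \<ge> \<Gamma>) \<partial>M)"
      using indep_var_lebesgue_integral[OF iv] Zint Iint by (simp add: o_def)
    also have "(\<integral>\<omega>. ind (SNR 1 \<omega> \<ge> \<Gamma>) \<partial>M) = (\<integral>\<omega>. indicator {\<omega>\<in>space M. SNR 1 \<omega> \<ge> \<Gamma>} \<omega> \<partial>M)"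
      by (rule Bochner_Integration.integral_cong) (auto simp: ind_def)
    also have "\<dots> = P" unfolding P_def by simp
    finally show ?thesis using ZE by simp
  qed
  have c0_eq: "c0 = (\<integral>\<omega>. fC (X 1 \<omega>) \<partial>M)"
  proof -
    have "(\<integral>\<omega>. fC (X 1 \<omega>) \<partial>M) = (\<integral>\<omega>. Y 1 \<omega> + (real L - 1) * Tsyn \<partial>M) + (\<integral>\<omega>. Z 1 \<omega> * ind (SNR 1 \<omega> \<ge> \<Gamma>) \<partial>M)"
      unfolding fCX using Yint ZIint by (subst Bochner_Integration.integral_add) auto
    also have "(\<integral>\<omega>. Y 1 \<omega> + (real L - 1) * Tsyn \<partial>M) = Tsyn / 2 + (real L - 1) * Tsyn"
      using Y_mean[of 1] by (subst Bochner_Integration.integral_add) (auto simp: prob_space)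
    finally show ?thesis unfolding c0_def EZI by (simp add: algebra_simps)
  qed
  have Pnn: "0 \<le> P" unfolding P_def by simp
  have c0_pos: "c0 > 0"
  proof -
    have "(real L - 1/2) * Tsyn > 0" using \<open>L \<ge> 1\<close> \<open>Tsyn > 0\<close> by simp
    moreover have "(Tsib - Tsyn) / 2 * P \<ge> 0" using \<open>Tsib \<ge> Tsyn\<close> Pnn by simp
    ultimately show ?thesis unfolding c0_def by linarith
  qed
  have fR_nn: "0 \<le> fR (X i \<omega>)" if "i \<ge> 1" "\<omega> \<in> space M" for i \<omega>
    using SNR_nn[OF that] beta_01[OF that] ind01 \<open>W > 0\<close> \<open>Tdata > 0\<close>
    unfolding fRX Rhat_def Rsel_def by (simp add: zero_le_mult_iff)
  have fC_nn: "AE \<omega> in M. 0 \<le> fC (X i \<omega>)" if "i \<ge> 1" for i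
    using Z_nn[OF that] AE_space
  proof eventually_elim
    case (elim \<omega>)
    then show ?case using Y_nn[OF that elim(2)] ind01 \<open>L \<ge> 1\<close> \<open>Tsyn > 0\<close>
      unfolding fCX by (simp add: add_nonneg_nonneg)
  qed
  have R_pos': "measure M {\<omega>\<in>space M. fR (X 1 \<omega>) > 0} > 0"
  proof -
    have "{\<omega>\<in>space M. fR (X 1 \<omega>) > 0} = {\<omega> \<in> space M. Rsel beta SNR 1 \<omega> * ind (SNR 1 \<omega> \<ge> \<Gamma>) > 0}"
      unfolding fRX Rhat_def using \<open>W > 0\<close> \<open>Tdata > 0\<close> by (auto simp: zero_less_mult_iff mult.assoc)
    then show ?thesis using R_pos by simp
  qed
  interpret sp: stopprob M X fR fC D c0
  proof unfold_locales
    show "X i \<in> borel_measurable M" for i unfolding X_def by (rule meas)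
    show "indep_vars (\<lambda>_. borel) X {1..}" unfolding X_def by (rule indep)
    show "distr M borel (X i) = distr M borel (X 1)" if "i \<ge> 1" for i unfolding X_def by (rule ident[OF that])
    show "D > 0" unfolding D_def using \<open>Tra > 0\<close> \<open>Tdata > 0\<close> by simp
  qed (use fR_nn fC_nn fR_int fC_int c0_eq c0_pos R_pos' in auto)
  have RhEq: "Rhat W Tdata \<Gamma> beta SNR = sp.Rh"
    by (auto simp: fun_eq_iff sp.Rh_def fRX)
  have TEq: "Ttime Tsyn L Tra Tdata \<Gamma> SNR Y Z = sp.TT"
    unfolding fun_eq_iff sp.TT_def Ttime_def by (simp add: fCX D_def add.assoc)
  have lamEq: "(SUP N\<in>classC M (filt M (obs SNR beta Y Z)) sp.TT. rate M (Umax sp.Rh) sp.TT N) = ennreal sp.lam0"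
    using sp.SUP_rate unfolding X_def .
  have l: "enn2real (ennreal sp.lam0) = sp.lam0" using sp.lam0(1) by simp
  have NsEq: "(\<lambda>\<omega>. first_ge1 (\<lambda>n. Rsel beta SNR n \<omega> * ind (SNR n \<omega> \<ge> \<Gamma>)
                   \<ge> sp.lam0 * (Tra + Tdata) / (W * Tdata))) = sp.Ns (sp.lam0 * D)"
  proof -
    have "(sp.lam0 * (Tra + Tdata) / (W * Tdata) \<le> Rsel beta SNR n \<omega> * ind (SNR n \<omega> \<ge> \<Gamma>))
          \<longleftrightarrow> (sp.lam0 * D \<le> fR (X n \<omega>))" for n \<omega>
      unfolding fRX Rhat_def D_def using \<open>W > 0\<close> \<open>Tdata > 0\<close>
      by (simp add: pos_divide_le_eq mult.commute mult.left_commute)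
    then show ?thesis unfolding sp.Ns_def by simp
  qed
  have FFEq: "(\<integral>\<omega>. max (sp.Rh 1 \<omega> - x * (Tra + Tdata)) 0 \<partial>M) = sp.FF x" for x
    unfolding sp.FF_def sp.Rh_def by (simp add: D_def)
  have cEq: "(real L - 1/2) * Tsyn + (Tsib - Tsyn) / 2 * measure M {\<omega> \<in> space M. SNR 1 \<omega> \<ge> \<Gamma>} = c0"
    unfolding c0_def P_def ..
  have C: "sp.Ns (sp.lam0 * D) \<in> classC M (filt M (obs SNR beta Y Z)) sp.TT"
    "rate M (Umax sp.Rh) sp.TT (sp.Ns (sp.lam0 * D)) = ennreal sp.lam0"
    using sp.Ns_opt unfolding X_def by auto
  show ?thesis
    unfolding Let_def RhEq TEq lamEq l NsEq FFEq cEq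
    using C sp.lam0 by (auto simp: mult.commute)
qed


end
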